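(* Let $\mathcal F$ be a family of graphs, every member of which is connected, and let $v$ be the smallest number of vertices of a member of $\mathcal F$. Then for every positive integer $n$ and every nonnegative integer $k$, $$\left(1-\frac{2kv}{n}\right)\mathrm{ex}(n,\mathcal F)\le \mathrm{exa}_k(n,\mathcal F)\le \mathrm{ex}(n,\mathcal F)+k=\mathrm{exa}_0(n,\mathcal F)+k.$$
   Context: For graphs $H$ and $F$, $\mathcal N(H,F)$ is the number of subgraphs of $H$ isomorphic to $F$. For a family $\mathcal F$ of graphs and a nonnegative integer $k$, $\mathrm{exa}_k(n,\mathcal F)$ is the largest number of edges of a simple graph $H$ on $n$ vertices with $\sum_{F\in\mathcal F}\mathcal N(H,F)=k$ (defined whenever such an $H$ exists). $\mathrm{ex}(n,\mathcal F)=\mathrm{exa}_0(n,\mathcal F)$ is the largest number of edges of a graph on $n$ vertices containing no subgraph isomorphic to a member of $\mathcal F$. *)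

theory Defs
  imports Complex_Main
begin

type_synonym 'a graph = "'a set \<times> 'a set set"

definition is_graph :: "'a graph \<Rightarrow> bool" where
  "is_graph G \<longleftrightarrow> finite (fst G) \<and>
     (\<forall>e\<in>snd G. \<exists>a b. a \<in> fst G \<and> b \<in> fst G \<and> a \<noteq> b \<and> e = {a, b})"

definition adj_rel :: "'a graph \<Rightarrow> ('a \<times> 'a) set" where
  "adj_rel G = {(x, y). {x, y} \<in> snd G}"

definition connected_graph :: "'a graph \<Rightarrow> bool" where
  "connected_graph G \<longleftrightarrow> is_graph G \<and> fst G \<noteq> {} \<and>
     (\<forall>x\<in>fst G. \<forall>y\<in>fst G. (x, y) \<in> (adj_rel G)\<^sup>*)"

definition graph_iso :: "'a graph \<Rightarrow> 'b graph \<Rightarrow> bool" where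
  "graph_iso G H \<longleftrightarrow> (\<exists>f. bij_betw f (fst G) (fst H) \<and>
     (\<forall>x\<in>fst G. \<forall>y\<in>fst G. {x, y} \<in> snd G \<longleftrightarrow> {f x, f y} \<in> snd H))"

definition subgraphs :: "'a graph \<Rightarrow> 'a graph set" where
  "subgraphs H = {S. fst S \<subseteq> fst H \<and> snd S \<subseteq> snd H \<and> is_graph S}"

text \<open>Number of subgraphs of H isomorphic to a member of the family \<F>
  (= sum over \<F> of N(H,F) for a family of pairwise non-isomorphic graphs).\<close>
definition fam_count :: "'b graph set \<Rightarrow> 'a graph \<Rightarrow> nat" where
  "fam_count \<F> H = card {S \<in> subgraphs H. \<exists>F\<in>\<F>. graph_iso F S}"

definition graphs_on :: "nat \<Rightarrow> nat graph set" where
  "graphs_on n = {G. fst G = {0..<n} \<and> is_graph G}"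

definition exa :: "nat \<Rightarrow> nat \<Rightarrow> 'b graph set \<Rightarrow> nat" where
  "exa k n \<F> = Max {card (snd H) | H. H \<in> graphs_on n \<and> fam_count \<F> H = k}"

definition ex :: "nat \<Rightarrow> 'b graph set \<Rightarrow> nat" where
  "ex n \<F> = Max {card (snd H) | H. H \<in> graphs_on n \<and> fam_count \<F> H = 0}"

definition min_order :: "'b graph set \<Rightarrow> nat" where
  "min_order \<F> = (LEAST m. \<exists>F\<in>\<F>. card (fst F) = m)"

end

theory Submission
  imports Defs
begin


lemma degree_sum:
  assumes fV: "finite V" and E: "\<forall>e\<in>E. e \<subseteq> V \<and> card e = 2"
  shows "(\<Sum>x\<in>V. card {e\<in>E. x\<in>e}) = 2 * card E"
proof -
  have fE: "finite E" using E fV by (meson Pow_iff finite_Pow_iff finite_subset subsetI)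
  have "(\<Sum>x\<in>V. card {e\<in>E. x\<in>e}) = (\<Sum>x\<in>V. \<Sum>e\<in>E. if x \<in> e then 1 else 0)"
    using fE by (simp add: sum.inter_filter[symmetric])
  also have "\<dots> = (\<Sum>e\<in>E. \<Sum>x\<in>V. if x \<in> e then 1 else 0)" by (rule sum.swap)
  also have "\<dots> = (\<Sum>e\<in>E. card {x\<in>V. x\<in>e})"
    using fV by (simp add: sum.inter_filter[symmetric])
  also have "\<dots> = (\<Sum>e\<in>E. 2)"
  proof (rule sum.cong)
    fix e assume "e \<in> E" then have "{x\<in>V. x\<in>e} = e" "card e = 2" using E by auto
    then show "card {x\<in>V. x\<in>e} = 2" by simp
  qed simp
  finally show ?thesis by simp
qed

lemma degree_avg:
  assumes fV: "finite V" and E: "\<forall>e\<in>E. e \<subseteq> V \<and> card e = 2" and m: "m \<le> card V"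
  shows "\<exists>X\<subseteq>V. card X = m \<and> card V * card {e\<in>E. e \<inter> X \<noteq> {}} \<le> m * (2 * card E)"
proof -
  define d where "d x = card {e\<in>E. x\<in>e}" for x
  have fE: "finite E" using E fV by (meson Pow_iff finite_Pow_iff finite_subset subsetI)
  obtain X0 where "X0 \<subseteq> V" "card X0 = m" using obtain_subset_with_card_n[OF m] by metis
  then have "\<exists>X. (X \<subseteq> V \<and> card X = m) \<and> (\<forall>Y. Y \<subseteq> V \<and> card Y = m \<longrightarrow> sum d X \<le> sum d Y)"
    by (intro ex_has_least_nat[where P="\<lambda>Y. Y \<subseteq> V \<and> card Y = m" and m="sum d"]) simp
  then obtain X where X: "X \<subseteq> V" "card X = m"
    and Xmin: "\<forall>Y. Y \<subseteq> V \<and> card Y = m \<longrightarrow> sum d X \<le> sum d Y"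
    by blast
  have fX: "finite X" using X fV finite_subset by blast
  have swap: "d x \<le> d y" if "x \<in> X" "y \<in> V - X" for x y
  proof (rule ccontr)
    assume "\<not> d x \<le> d y"
    define Y where "Y = insert y (X - {x})"
    have "Y \<subseteq> V" using X that by (auto simp: Y_def)
    moreover have "card Y = m"
    proof -
      have "m > 0" using that fX X card_gt_0_iff by blast
      then show ?thesis using that fX X by (simp add: Y_def)
    qed
    ultimately have "sum d X \<le> sum d Y" using Xmin by blast
    moreover have "sum d Y = d y + sum d (X - {x})" using that fX by (simp add: Y_def)
    moreover have "sum d X = d x + sum d (X - {x})" using that fX by (simp add: sum.remove)
    ultimately show False using \<open>\<not> d x \<le> d y\<close> by simp
  qed
  have s1: "card (V - X) * sum d X \<le> m * sum d (V - X)"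
  proof -
    have "card (V - X) * sum d X = (\<Sum>y\<in>V-X. \<Sum>x\<in>X. d x)" by simp
    also have "\<dots> \<le> (\<Sum>y\<in>V-X. \<Sum>x\<in>X. d y)"
      by (intro sum_mono) (use swap in auto)
    also have "\<dots> = m * sum d (V - X)" using X by (simp add: sum_distrib_left)
    finally show ?thesis .
  qed
  have cV: "card V = card (V - X) + m" using X fX fV
    by (metis card_Diff_subset card_mono le_add_diff_inverse2)
  have sV: "sum d V = sum d (V - X) + sum d X" using X fV
    by (metis sum.subset_diff)
  have T: "card {e\<in>E. e \<inter> X \<noteq> {}} \<le> sum d X"
  proof -
    have "{e\<in>E. e \<inter> X \<noteq> {}} = (\<Union>x\<in>X. {e\<in>E. x\<in>e})" by auto
    then show ?thesis using card_UN_le[OF fX, of "\<lambda>x. {e\<in>E. x\<in>e}"] by (simp add: d_def)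
  qed
  have "card V * card {e\<in>E. e \<inter> X \<noteq> {}} \<le> card V * sum d X" using T by simp
  also have "\<dots> = card (V - X) * sum d X + m * sum d X" using cV by (simp add: algebra_simps)
  also have "\<dots> \<le> m * sum d (V - X) + m * sum d X" using s1 by simp
  also have "\<dots> = m * sum d V" using sV by (simp add: algebra_simps)
  also have "\<dots> = m * (2 * card E)" using degree_sum[OF fV E] by (simp add: d_def)
  finally show ?thesis using X by blast
qed


lemma finite_subgraphs: "finite (fst H) \<Longrightarrow> finite (subgraphs H)"
proof -
  assume f: "finite (fst H)"
  have "subgraphs H \<subseteq> Pow (fst H) \<times> Pow (Pow (fst H))"
    by (auto simp: subgraphs_def is_graph_def) fastforce
  then show ?thesis using f by (meson finite_Pow_iff finite_SigmaI finite_subset)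
qed

lemma fam_count_zero:
  "finite (fst H) \<Longrightarrow> fam_count \<F> H = 0 \<Longrightarrow> S \<in> subgraphs H \<Longrightarrow> F \<in> \<F> \<Longrightarrow> \<not> graph_iso F S"
proof -
  assume a: "finite (fst H)" "fam_count \<F> H = 0" "S \<in> subgraphs H" "F \<in> \<F>"
  have "finite {S \<in> subgraphs H. \<exists>F\<in>\<F>. graph_iso F S}" using finite_subgraphs[OF a(1)] by simp
  then have "{S \<in> subgraphs H. \<exists>F\<in>\<F>. graph_iso F S} = {}" using a(2) by (simp add: fam_count_def)
  then show ?thesis using a(3,4) by blast
qed

lemma is_graph_edge: "is_graph G \<Longrightarrow> {a, b} \<in> snd G \<Longrightarrow> a \<in> fst G \<and> b \<in> fst G \<and> a \<noteq> b"
  unfolding is_graph_def by (metis doubleton_eq_iff)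

lemma iso_edge_card:
  assumes "is_graph F" "is_graph S" "graph_iso F S"
  shows "card (snd S) = card (snd F)"
proof -
  obtain f where f: "bij_betw f (fst F) (fst S)"
    and e: "\<forall>x\<in>fst F. \<forall>y\<in>fst F. {x, y} \<in> snd F \<longleftrightarrow> {f x, f y} \<in> snd S"
    using assms(3) unfolding graph_iso_def by blast
  have sub: "\<forall>e\<in>snd F. e \<subseteq> fst F" using assms(1) unfolding is_graph_def by auto
  have inj: "inj_on f (fst F)" using f bij_betw_def by blast
  have "snd S = (\<lambda>e. f ` e) ` snd F"
  proof
    show "snd S \<subseteq> (\<lambda>e. f ` e) ` snd F"
    proof
      fix e assume "e \<in> snd S"
      then obtain x y where xy: "x \<in> fst S" "y \<in> fst S" "e = {x, y}"
        using assms(2) unfolding is_graph_def by blast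
      have "x \<in> f ` fst F" "y \<in> f ` fst F" using f xy unfolding bij_betw_def by auto
      then obtain a b where "a \<in> fst F" "b \<in> fst F" "x = f a" "y = f b" by blast
      then have "{f a, f b} \<in> snd S" using xy \<open>e \<in> snd S\<close> by simp
      then have "{a, b} \<in> snd F" using e \<open>a \<in> fst F\<close> \<open>b \<in> fst F\<close> by blast
      moreover have "e = f ` {a, b}" using xy \<open>x = f a\<close> \<open>y = f b\<close> by simp
      ultimately show "e \<in> (\<lambda>e. f ` e) ` snd F" by blast
    qed
  next
    show "(\<lambda>e. f ` e) ` snd F \<subseteq> snd S"
    proof
      fix e' assume "e' \<in> (\<lambda>e. f ` e) ` snd F"
      then obtain e where "e \<in> snd F" "e' = f ` e" by blast
      then obtain a b where "a \<in> fst F" "b \<in> fst F" "e = {a, b}"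
        using assms(1) unfolding is_graph_def by blast
      then have "{f a, f b} \<in> snd S" using e \<open>e \<in> snd F\<close> by blast
      then show "e' \<in> snd S" using \<open>e' = f ` e\<close> \<open>e = {a, b}\<close> by simp
    qed
  qed
  moreover have "inj_on (\<lambda>e. f ` e) (snd F)"
    by (rule inj_onI) (metis inj inj_on_image_eq_iff sub)
  ultimately show ?thesis by (simp add: card_image)
qed

lemma iso_class:
  assumes "connected_graph F" "graph_iso F S" "snd S \<subseteq> EH"
    and cls: "\<forall>x y. {x, y} \<in> EH \<longrightarrow> c x = c y"
    and "x \<in> fst S" "y \<in> fst S"
  shows "c x = c y"
proof -
  obtain f where f: "bij_betw f (fst F) (fst S)"
    and e: "\<forall>x\<in>fst F. \<forall>y\<in>fst F. {x, y} \<in> snd F \<longleftrightarrow> {f x, f y} \<in> snd S"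
    using assms(2) unfolding graph_iso_def by blast
  have gF: "is_graph F" using assms(1) unfolding connected_graph_def by blast
  have "x \<in> f ` fst F" "y \<in> f ` fst F" using f assms(5,6) unfolding bij_betw_def by auto
  then obtain a b where ab: "a \<in> fst F" "b \<in> fst F" "x = f a" "y = f b" by blast
  have "(a, b) \<in> (adj_rel F)\<^sup>*" using assms(1) ab unfolding connected_graph_def by blast
  then have "c (f b) = c (f a)"
  proof (induction rule: rtrancl_induct)
    case base then show ?case by simp
  next
    case (step y z)
    then have yz: "{y, z} \<in> snd F" by (simp add: adj_rel_def)
    then have "y \<in> fst F" "z \<in> fst F" using is_graph_edge[OF gF] by auto
    then have "{f y, f z} \<in> EH" using e yz assms(3) by blast
    then have "c (f y) = c (f z)" using cls by blast
    then show ?case using step.IH by simp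
  qed
  then show ?thesis using ab by simp
qed

lemma copy_has_edge:
  assumes "connected_graph F" "graph_iso F S" "is_graph S"
    and H0: "H0 \<in> graphs_on n" "fam_count \<F> H0 = 0" "n > 0" "F \<in> \<F>"
  shows "snd S \<noteq> {}"
proof
  assume S0: "snd S = {}"
  have gF: "is_graph F" using assms(1) unfolding connected_graph_def by blast
  have "card (snd F) = 0" using iso_edge_card[OF gF assms(3,2)] S0 by simp
  moreover have "finite (snd F)"
  proof -
    have "snd F \<subseteq> Pow (fst F)" using gF unfolding is_graph_def by auto
    then show ?thesis using gF unfolding is_graph_def by (meson finite_Pow_iff finite_subset)
  qed
  ultimately have F0: "snd F = {}" by simp
  have "fst F \<noteq> {}" using assms(1) unfolding connected_graph_def by blast
  then obtain a where a: "a \<in> fst F" by blast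
  have "adj_rel F = {}" using F0 by (simp add: adj_rel_def)
  have "x = a" if "x \<in> fst F" for x
  proof -
    have "(a, x) \<in> (adj_rel F)\<^sup>*" using assms(1) a that unfolding connected_graph_def by blast
    then show "x = a" using \<open>adj_rel F = {}\<close> by simp
  qed
  then have "fst F = {a}" using a by blast
  have "graph_iso F ({0::nat}, {})" unfolding graph_iso_def
    using \<open>fst F = {a}\<close> F0 by (intro exI[of _ "\<lambda>_. 0"]) (simp add: bij_betw_def)
  moreover have "({0::nat}, {}) \<in> subgraphs H0" using H0
    by (simp add: subgraphs_def graphs_on_def is_graph_def)
  moreover have "finite (fst H0)" using H0 by (simp add: graphs_on_def)
  ultimately show False using fam_count_zero H0 by blast
qed


lemma construct:
  fixes \<F> :: "'b graph set" and G :: "nat graph"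
  assumes conn: "\<forall>F\<in>\<F>. connected_graph F"
    and F0: "F0 \<in> \<F>" "card (fst F0) = v"
    and leastv: "\<forall>F\<in>\<F>. v \<le> card (fst F)"
    and minE: "\<forall>F\<in>\<F>. card (fst F) = v \<longrightarrow> card (snd F0) \<le> card (snd F)"
    and G: "G \<in> graphs_on n" "fam_count \<F> G = 0"
    and X: "X \<subseteq> {0..<n}" "card X = k * v"
  shows "\<exists>H\<in>graphs_on n. fam_count \<F> H = k \<and>
           card (snd G) \<le> card (snd H) + card {e\<in>snd G. e \<inter> X \<noteq> {}}"
proof -
  have cF0: "connected_graph F0" using conn F0 by blast
  have gF0: "is_graph F0" using cF0 connected_graph_def by blast
  have fF0: "finite (fst F0)" using gF0 is_graph_def by blast
  have neF0: "fst F0 \<noteq> {}" using cF0 connected_graph_def by blast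
  have gG: "is_graph G" and VG: "fst G = {0..<n}" using G by (auto simp: graphs_on_def)
  define D where "D = {0..<k} \<times> fst F0"
  have fD: "finite D" using fF0 by (simp add: D_def)
  have cD: "card D = card X" using X F0 fF0 by (simp add: D_def card_cartesian_product)
  have fX: "finite X" using X finite_subset by blast
  obtain h where h: "bij_betw h D X" using finite_same_card_bij[OF fD fX cD] by blast
  have injh: "inj_on h D" using h bij_betw_def by blast
  define g where "g i a = h (i, a)" for i a
  define B where "B i = g i ` fst F0" for i
  define Ei where "Ei i = (\<lambda>e. g i ` e) ` snd F0" for i
  define EG where "EG = {e\<in>snd G. e \<inter> X = {}}"
  define EH where "EH = EG \<union> (\<Union>i\<in>{0..<k}. Ei i)"
  define H where "H = ({0..<n}, EH)"
  have injg: "inj_on (g i) (fst F0)" if "i < k" for i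
    using injh that unfolding g_def D_def by (auto intro!: inj_onI dest: inj_onD)
  have BX: "B i \<subseteq> X" if "i < k" for i
    using h that unfolding B_def g_def D_def bij_betw_def by auto
  have cB: "card (B i) = v" if "i < k" for i
    using injg[OF that] F0 by (simp add: B_def card_image)
  have disj: "i = j" if "x \<in> B i" "x \<in> B j" "i < k" "j < k" for i j x
  proof -
    have "x \<in> g i ` fst F0" "x \<in> g j ` fst F0" using that unfolding B_def by auto
    then obtain a b where "a \<in> fst F0" "b \<in> fst F0" "x = h (i, a)" "x = h (j, b)"
      unfolding g_def by blast
    then have "(i, a) = (j, b)" using injh that unfolding D_def by (auto dest: inj_onD)
    then show ?thesis by simp
  qed
  have sub0: "\<forall>e\<in>snd F0. e \<subseteq> fst F0" using gF0 unfolding is_graph_def by auto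
  have EiB: "e \<subseteq> B i" if "e \<in> Ei i" for e i
    using that sub0 unfolding Ei_def B_def by auto
  have Ei_edge: "\<exists>a b. a \<in> B i \<and> b \<in> B i \<and> a \<noteq> b \<and> e = {a, b}" if ei: "e \<in> Ei i" and ik: "i < k" for e i
  proof -
    obtain e0 where e0: "e0 \<in> snd F0" "e = g i ` e0" using ei unfolding Ei_def by blast
    then obtain a b where ab: "a \<in> fst F0" "b \<in> fst F0" "a \<noteq> b" "e0 = {a, b}"
      using gF0 unfolding is_graph_def by blast
    then have "g i a \<noteq> g i b" using injg[OF ik] by (auto dest: inj_onD)
    then show ?thesis using ab e0 unfolding B_def by auto
  qed
  have gH0: "\<forall>e\<in>EH. \<exists>a b. a \<in> {0..<n} \<and> b \<in> {0..<n} \<and> a \<noteq> b \<and> e = {a, b}"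
  proof
    fix e assume "e \<in> EH"
    then consider "e \<in> EG" | i where "i < k" "e \<in> Ei i" unfolding EH_def by auto
    then show "\<exists>a b. a \<in> {0..<n} \<and> b \<in> {0..<n} \<and> a \<noteq> b \<and> e = {a, b}"
    proof cases
      case 1 then have "e \<in> snd G" unfolding EG_def by blast
      then show ?thesis using gG VG unfolding is_graph_def by simp
    next
      case 2
      obtain a b where ab: "a \<in> B i" "b \<in> B i" "a \<noteq> b" "e = {a, b}"
        using Ei_edge[OF 2(2,1)] by blast
      have "a \<in> {0..<n}" "b \<in> {0..<n}" using ab BX[OF 2(1)] X by auto
      then show ?thesis using ab by blast
    qed
  qed
  have gH: "H \<in> graphs_on n" using gH0 unfolding graphs_on_def H_def is_graph_def by simp
  have finEH: "finite EH"
  proof -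
    have "EH \<subseteq> Pow {0..<n}" using gH unfolding graphs_on_def H_def is_graph_def by auto
    then show ?thesis by (meson finite_Pow_iff finite_atLeastLessThan finite_subset)
  qed
  have edges: "card (snd G) \<le> card (snd H) + card {e\<in>snd G. e \<inter> X \<noteq> {}}"
  proof -
    have "snd G = EG \<union> {e\<in>snd G. e \<inter> X \<noteq> {}}" unfolding EG_def by auto
    then have "card (snd G) \<le> card EG + card {e\<in>snd G. e \<inter> X \<noteq> {}}"
      by (metis card_Un_le)
    moreover have "card EG \<le> card EH" using finEH by (intro card_mono) (auto simp: EH_def)
    ultimately show ?thesis by (simp add: H_def)
  qed
  define c where "c x = (if x \<in> X then Some (fst (inv_into D h x)) else None)" for x
  have cls: "\<forall>x y. {x, y} \<in> EH \<longrightarrow> c x = c y"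
  proof (intro allI impI)
    fix x y assume "{x, y} \<in> EH"
    then consider "{x, y} \<in> EG" | i where "i < k" "{x, y} \<in> Ei i" unfolding EH_def by auto
    then show "c x = c y"
    proof cases
      case 1 then show ?thesis unfolding EG_def c_def by auto
    next
      case 2
      have "c z = Some i" if "z \<in> {x, y}" for z
      proof -
        have "z \<in> B i" using EiB[OF 2(2)] that by blast
        then obtain a where a: "a \<in> fst F0" "z = h (i, a)" unfolding B_def g_def by auto
        then have "(i, a) \<in> D" using 2(1) by (simp add: D_def)
        then have "inv_into D h z = (i, a)" using a injh by (simp add: inv_into_f_f)
        moreover have "z \<in> X" using BX[OF 2(1)] \<open>z \<in> B i\<close> by blast
        ultimately show ?thesis by (simp add: c_def)
      qed
      then show ?thesis by simp
    qed
  qed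
  define CS where "CS = {S \<in> subgraphs H. \<exists>F\<in>\<F>. graph_iso F S}"
  have fG: "finite (fst G)" using VG by simp
  have CS_sub: "CS \<subseteq> (\<lambda>i. (B i, Ei i)) ` {0..<k}"
  proof
    fix S assume "S \<in> CS"
    then obtain F where S: "S \<in> subgraphs H" "F \<in> \<F>" "graph_iso F S" unfolding CS_def by blast
    have cF: "connected_graph F" using conn S by blast
    have gF: "is_graph F" using cF connected_graph_def by blast
    have gS: "is_graph S" and VS: "fst S \<subseteq> {0..<n}" and ES: "snd S \<subseteq> EH"
      using S unfolding subgraphs_def H_def by auto
    obtain f where f: "bij_betw f (fst F) (fst S)" using S(3) unfolding graph_iso_def by blast
    have cardS: "card (fst S) = card (fst F)" using bij_betw_same_card[OF f] by simp
    obtain x0 where x0: "x0 \<in> fst S" using f cF unfolding connected_graph_def bij_betw_def by auto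
    have same: "c x = c x0" if "x \<in> fst S" for x
      using iso_class[OF cF S(3) ES cls that x0] .
    show "S \<in> (\<lambda>i. (B i, Ei i)) ` {0..<k}"
    proof (cases "c x0")
      case None
      then have nX: "x \<notin> X" if "x \<in> fst S" for x using same[OF that] by (auto simp: c_def split: if_splits)
      have "snd S \<subseteq> snd G"
      proof
        fix e assume e: "e \<in> snd S"
        then obtain x y where xy: "x \<in> fst S" "y \<in> fst S" "e = {x, y}"
          using gS unfolding is_graph_def by blast
        have "e \<in> EH" using e ES by blast
        moreover have "e \<notin> Ei i" if "i < k" for i
          using EiB BX[OF that] xy nX by blast
        ultimately show "e \<in> snd G" unfolding EH_def EG_def by auto
      qed
      then have "S \<in> subgraphs G" using gS VS VG by (simp add: subgraphs_def)
      then show ?thesis using fam_count_zero[OF fG G(2) _ S(2)] S(3) by blast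
    next
      case (Some i)
      have inB: "x \<in> B i" "i < k" if "x \<in> fst S" for x
      proof -
        have xX: "x \<in> X" and fi: "fst (inv_into D h x) = i"
          using same[OF that] Some by (auto simp: c_def split: if_splits)
        have inD: "inv_into D h x \<in> D" using xX h by (metis bij_betw_def inv_into_into)
        have hx: "h (inv_into D h x) = x" using xX h by (metis bij_betw_def f_inv_into_f)
        obtain j a where ja: "inv_into D h x = (j, a)" by (meson surj_pair)
        then show "x \<in> B i" using fi inD hx by (auto simp: B_def g_def D_def)
        show "i < k" using ja fi inD by (auto simp: D_def)
      qed
      have ik: "i < k" using inB(2)[OF x0] .
      have sBi: "fst S \<subseteq> B i" using inB by blast
      have fB: "finite (B i)" using fF0 by (simp add: B_def)
      have "v \<le> card (fst S)" using cardS leastv S(2) by simp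
      then have VSB: "fst S = B i" using card_seteq[OF fB sBi] cB[OF ik] by simp
      then have cFv: "card (fst F) = v" using cardS cB[OF ik] by simp
      have "card (snd S) = card (snd F)" using iso_edge_card[OF gF gS S(3)] .
      then have c1: "card (snd F0) \<le> card (snd S)" using minE S(2) cFv by simp
      have sE: "snd S \<subseteq> Ei i"
      proof
        fix e assume e: "e \<in> snd S"
        then obtain x y where xy: "x \<in> fst S" "y \<in> fst S" "e = {x, y}"
          using gS unfolding is_graph_def by blast
        have "x \<in> X" using xy VSB BX[OF ik] by blast
        then have "e \<notin> EG" using xy by (auto simp: EG_def)
        then obtain j where j: "j < k" "e \<in> Ei j" using e ES unfolding EH_def by auto
        have "x \<in> B j" using EiB[OF j(2)] xy by blast
        then have "j = i" using disj xy VSB ik j by blast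
        then show "e \<in> Ei i" using j by simp
      qed
      have fEi: "finite (Ei i)" using finEH unfolding EH_def using ik
        by (meson UN_I atLeastLessThan_iff finite_subset le0 subsetI UnCI)
      have "card (Ei i) \<le> card (snd F0)" unfolding Ei_def
      by (rule card_image_le) (meson sub0 PowI finite_Pow_iff fF0 finite_subset subsetI)
      then have "snd S = Ei i" using card_seteq[OF fEi sE] c1 by simp
      then have "S = (B i, Ei i)" using VSB by (metis prod.collapse)
      then show ?thesis using ik by auto
    qed
  qed
  have CS_sup: "(\<lambda>i. (B i, Ei i)) ` {0..<k} \<subseteq> CS"
  proof
    fix S assume "S \<in> (\<lambda>i. (B i, Ei i)) ` {0..<k}"
    then obtain i where i: "i < k" "S = (B i, Ei i)" by auto
    have "is_graph (B i, Ei i)" unfolding is_graph_def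
      using Ei_edge[OF _ i(1)] fF0 by (simp add: B_def)
    moreover have "B i \<subseteq> {0..<n}" using BX[OF i(1)] X by blast
    moreover have "Ei i \<subseteq> EH" using i(1) by (auto simp: EH_def)
    ultimately have sg: "(B i, Ei i) \<in> subgraphs H" by (simp add: subgraphs_def H_def)
    have bij: "bij_betw (g i) (fst F0) (B i)" using injg[OF i(1)] by (simp add: bij_betw_def B_def)
    have "{x, y} \<in> snd F0 \<longleftrightarrow> {g i x, g i y} \<in> Ei i" if "x \<in> fst F0" "y \<in> fst F0" for x y
    proof
      assume "{x, y} \<in> snd F0"
      then have "g i ` {x, y} \<in> Ei i" unfolding Ei_def by (rule imageI)
      then show "{g i x, g i y} \<in> Ei i" by simp
    next
      assume "{g i x, g i y} \<in> Ei i"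
      then obtain e0 where e0: "e0 \<in> snd F0" "{g i x, g i y} = g i ` e0" by (auto simp: Ei_def)
      then have "g i ` {x, y} = g i ` e0" by simp
      moreover have "{x, y} \<subseteq> fst F0" using that by simp
      moreover have "e0 \<subseteq> fst F0" using sub0 e0(1) by blast
      ultimately have "{x, y} = e0" using inj_on_image_eq_iff[OF injg[OF i(1)]] by metis
      then show "{x, y} \<in> snd F0" using e0 by simp
    qed
    then have "graph_iso F0 (B i, Ei i)" unfolding graph_iso_def using bij by auto
    then show "S \<in> CS" using sg i F0 by (auto simp: CS_def)
  qed
  have inj: "inj_on (\<lambda>i. (B i, Ei i)) {0..<k}"
  proof (rule inj_onI)
    fix i j assume ij: "i \<in> {0..<k}" "j \<in> {0..<k}" "(B i, Ei i) = (B j, Ei j)"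
    obtain a where "a \<in> fst F0" using neF0 by blast
    then have "g i a \<in> B i" by (simp add: B_def)
    then have "g i a \<in> B j" using ij by simp
    then show "i = j" using disj \<open>g i a \<in> B i\<close> ij by auto
  qed
  have "fam_count \<F> H = card CS" by (simp add: fam_count_def CS_def)
  also have "\<dots> = k" using CS_sub CS_sup inj card_image by fastforce
  finally show ?thesis using gH edges by blast
qed


lemma finite_graphs_on: "finite (graphs_on n)"
proof -
  have "graphs_on n \<subseteq> {{0..<n}} \<times> Pow (Pow {0..<n})"
    unfolding graphs_on_def is_graph_def by auto
  moreover have "finite ({{0..<n}} \<times> Pow (Pow {0..<n}))" by simp
  ultimately show ?thesis by (rule finite_subset)
qed

lemma fin_vals: "finite {card (snd H) | H. H \<in> graphs_on n \<and> fam_count \<F> H = j}"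
proof -
  have "{card (snd H) | H. H \<in> graphs_on n \<and> fam_count \<F> H = j} \<subseteq> (\<lambda>H. card (snd H)) ` graphs_on n"
  proof
    fix c assume "c \<in> {card (snd H) | H. H \<in> graphs_on n \<and> fam_count \<F> H = j}"
    then obtain H where "H \<in> graphs_on n" "c = card (snd H)" by blast
    then show "c \<in> (\<lambda>H. card (snd H)) ` graphs_on n" by blast
  qed
  then show ?thesis using finite_graphs_on finite_subset by blast
qed

lemma graph_edges_fin: "H \<in> graphs_on n \<Longrightarrow> finite (snd H)"
proof -
  assume "H \<in> graphs_on n"
  then have "snd H \<subseteq> Pow {0..<n}" unfolding graphs_on_def is_graph_def by auto
  then show ?thesis by (meson finite_Pow_iff finite_atLeastLessThan finite_subset)
qed

theorem proposition2p1:
  fixes \<F> :: "'b graph set" and n k :: nat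
  assumes "\<F> \<noteq> {}"
    and "\<forall>F\<in>\<F>. connected_graph F"
    and "n > 0"
    and "\<exists>H\<in>graphs_on n. fam_count \<F> H = k"
    and "\<exists>H\<in>graphs_on n. fam_count \<F> H = 0"
  shows "(1 - 2 * real k * real (min_order \<F>) / real n) * real (ex n \<F>) \<le> real (exa k n \<F>)
    \<and> exa k n \<F> \<le> ex n \<F> + k
    \<and> ex n \<F> + k = exa 0 n \<F> + k"
proof -
  note conn = assms(2)
  obtain H0 where H0: "H0 \<in> graphs_on n" "fam_count \<F> H0 = 0" using assms(5) by blast
  have exa_ge: "card (snd H) \<le> exa j n \<F>" if "H \<in> graphs_on n" "fam_count \<F> H = j" for H j
    unfolding exa_def by (rule Max_ge[OF fin_vals]) (use that in blast)
  have exa_in: "\<exists>H\<in>graphs_on n. fam_count \<F> H = j \<and> card (snd H) = exa j n \<F>"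
    if "\<exists>H\<in>graphs_on n. fam_count \<F> H = j" for j
  proof -
    have "exa j n \<F> \<in> {card (snd H) | H. H \<in> graphs_on n \<and> fam_count \<F> H = j}"
      unfolding exa_def by (rule Max_in[OF fin_vals]) (use that in blast)
    then show ?thesis by auto
  qed
  have exeq: "ex n \<F> = exa 0 n \<F>" by (simp add: ex_def exa_def)
  have upper: "exa k n \<F> \<le> ex n \<F> + k"
  proof -
    obtain H where H: "H \<in> graphs_on n" "fam_count \<F> H = k" "card (snd H) = exa k n \<F>"
      using exa_in[OF assms(4)] by blast
    define CS where "CS = {S \<in> subgraphs H. \<exists>F\<in>\<F>. graph_iso F S}"
    have cCS: "card CS = k" using H by (simp add: fam_count_def CS_def)
    define r where "r S = (SOME e. e \<in> snd S)" for S :: "nat graph"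
    define R where "R = r ` CS"
    have fCS: "finite CS" using finite_subgraphs[of H] H(1) by (auto simp: CS_def graphs_on_def)
    then have cR: "card R \<le> k" using cCS card_image_le R_def by metis
    have rS: "r S \<in> snd S" if SCS: "S \<in> CS" for S
    proof -
      obtain F where F: "S \<in> subgraphs H" "F \<in> \<F>" "graph_iso F S" using SCS unfolding CS_def by blast
      have "is_graph S" using F(1) by (simp add: subgraphs_def)
      then have "snd S \<noteq> {}"
        using copy_has_edge[OF _ F(3) _ H0 assms(3) F(2)] conn F(2) by blast
      then show ?thesis unfolding r_def by (simp add: some_in_eq)
    qed
    define H' where "H' = (fst H, snd H - R)"
    have gH': "H' \<in> graphs_on n" using H(1) unfolding graphs_on_def H'_def is_graph_def by auto
    have "{S \<in> subgraphs H'. \<exists>F\<in>\<F>. graph_iso F S} = {}"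
    proof (rule ccontr)
      assume "{S \<in> subgraphs H'. \<exists>F\<in>\<F>. graph_iso F S} \<noteq> {}"
      then obtain S F where S: "S \<in> subgraphs H'" "F \<in> \<F>" "graph_iso F S" by blast
      then have "S \<in> subgraphs H" unfolding subgraphs_def H'_def by auto
      then have "S \<in> CS" using S unfolding CS_def by blast
      then have "r S \<in> snd S" "r S \<in> R" using rS R_def by auto
      moreover have "snd S \<subseteq> snd H - R" using S(1) unfolding subgraphs_def H'_def by auto
      ultimately show False by blast
    qed
    then have "fam_count \<F> H' = 0" unfolding fam_count_def by (metis card.empty)
    then have "card (snd H') \<le> ex n \<F>" using exa_ge[OF gH'] exeq by simp
    moreover have "card (snd H) \<le> card (snd H') + card R"
    proof -
      have "snd H \<subseteq> (snd H - R) \<union> R" by blast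
      then have "card (snd H) \<le> card ((snd H - R) \<union> R)"
        using graph_edges_fin[OF H(1)] fCS by (intro card_mono) (auto simp: R_def)
      also have "\<dots> \<le> card (snd H - R) + card R" by (rule card_Un_le)
      finally show ?thesis by (simp add: H'_def)
    qed
    ultimately show ?thesis using H(3) cR by linarith
  qed
  define v where "v = min_order \<F>"
  have exv: "\<exists>F\<in>\<F>. card (fst F) = v"
  proof -
    obtain F1 where F1: "F1 \<in> \<F>" using assms(1) by blast
    then have "\<exists>F\<in>\<F>. card (fst F) = card (fst F1)" by blast
    then show ?thesis unfolding v_def min_order_def
      by (rule LeastI[where P="\<lambda>m. \<exists>F\<in>\<F>. card (fst F) = m"])
  qed
  have leastv: "\<forall>F\<in>\<F>. v \<le> card (fst F)"
  proof
    fix F assume "F \<in> \<F>"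
    then have "\<exists>F'\<in>\<F>. card (fst F') = card (fst F)" by blast
    then show "v \<le> card (fst F)" unfolding v_def min_order_def
      by (rule Least_le[where P="\<lambda>m. \<exists>F\<in>\<F>. card (fst F) = m"])
  qed
  have "\<exists>F0. (F0 \<in> \<F> \<and> card (fst F0) = v) \<and>
        (\<forall>F. F \<in> \<F> \<and> card (fst F) = v \<longrightarrow> card (snd F0) \<le> card (snd F))"
  proof -
    obtain F1 where "F1 \<in> \<F>" "card (fst F1) = v" using exv by blast
    then show ?thesis
      by (intro ex_has_least_nat[where m="\<lambda>F. card (snd F)" and k=F1]) blast
  qed
  then obtain F0 where F0: "F0 \<in> \<F>" "card (fst F0) = v"
    and minE: "\<forall>F\<in>\<F>. card (fst F) = v \<longrightarrow> card (snd F0) \<le> card (snd F)" by blast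
  have lower: "(1 - 2 * real k * real v / real n) * real (ex n \<F>) \<le> real (exa k n \<F>)"
  proof (cases "real n \<le> 2 * real k * real v")
    case True
    then have "1 - 2 * real k * real v / real n \<le> 0" using assms(3) by (simp add: field_simps)
    then have "(1 - 2 * real k * real v / real n) * real (ex n \<F>) \<le> 0"
      by (simp add: mult_nonpos_nonneg)
    then show ?thesis by simp
  next
    case False
    have "0 \<le> real k * real v" by simp
    then have "real (k * v) \<le> real n" using False by simp
    then have mn: "k * v \<le> n" by (simp only: of_nat_le_iff)
    obtain G where G: "G \<in> graphs_on n" "fam_count \<F> G = 0" "card (snd G) = ex n \<F>"
      using exa_in[OF assms(5)] exeq by auto
    have gG: "is_graph G" and VG: "fst G = {0..<n}" using G(1) by (auto simp: graphs_on_def)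
    have Eok: "\<forall>e\<in>snd G. e \<subseteq> {0..<n} \<and> card e = 2"
      using gG VG unfolding is_graph_def by auto
    obtain X where X: "X \<subseteq> {0..<n}" "card X = k * v"
      and XT: "card {0..<n} * card {e\<in>snd G. e \<inter> X \<noteq> {}} \<le> (k * v) * (2 * card (snd G))"
      using degree_avg[OF _ Eok, of "k * v"] mn by auto
    obtain H where H: "H \<in> graphs_on n" "fam_count \<F> H = k"
      and HE: "card (snd G) \<le> card (snd H) + card {e\<in>snd G. e \<inter> X \<noteq> {}}"
      using construct[OF conn F0 leastv minE G(1,2) X] by blast
    define T where "T = card {e\<in>snd G. e \<inter> X \<noteq> {}}"
    have XT': "real n * real T \<le> 2 * real k * real v * real (ex n \<F>)"
    proof -
      have "n * T \<le> k * v * 2 * ex n \<F>" using XT G(3) unfolding T_def by (simp add: algebra_simps)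
      then have "real (n * T) \<le> real (k * v * 2 * ex n \<F>)" by (simp only: of_nat_le_iff)
      then show ?thesis by (simp add: algebra_simps)
    qed
    have "real T \<le> 2 * real k * real v * real (ex n \<F>) / real n"
      using XT' assms(3) by (simp add: field_simps)
    moreover have "(1 - 2 * real k * real v / real n) * real (ex n \<F>)
        = real (ex n \<F>) - 2 * real k * real v * real (ex n \<F>) / real n"
      by (simp add: algebra_simps)
    moreover have "real (ex n \<F>) \<le> real (card (snd H)) + real T"
      using HE G(3) unfolding T_def by simp
    moreover have "card (snd H) \<le> exa k n \<F>" using exa_ge[OF H(1,2)] .
    ultimately show ?thesis by linarith
  qed
  show ?thesis using lower upper exeq unfolding v_def by simp
qed

end
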